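(* Let $k\ge 4$ be an integer and let $\Sigma$ be an alphabet with $|\Sigma|=l$. If $l\le 1$, then for every antimorphic involution $\theta$ on $\Sigma^*$ there is no infinite word over $\Sigma$ that is pseudo-$k$th-power-free with respect to $\theta$. If $l\ge 3$, then for every antimorphic involution $\theta$ on $\Sigma^*$ there exists an infinite word over $\Sigma$ that is pseudo-$k$th-power-free with respect to $\theta$. If $l=2$, the existence depends on the involution: there exists a pseudo-$k$th-power-free infinite word over $\Sigma$ with respect to one antimorphic involution of $\Sigma^*$ but not with respect to another.
   Context: A function $\theta:\Sigma^*\to\Sigma^*$ is an antimorphic involution if $\theta(uv)=\theta(v)\theta(u)$ and $\theta(\theta(w))=w$ for all words $u,v,w$. For an integer $k\ge 2$, a nonempty word $w$ is a pseudo $k$th power with respect to $\theta$ if $w=u_1u_2\cdots u_k$ where for all $1\le i,j\le k$, either $u_i=u_j$ or $u_i=\theta(u_j)$. A (finite or infinite) word is pseudo-$k$th-power-free with respect to $\theta$ if none of its factors (contiguous subwords) is a pseudo $k$th power with respect to $\theta$. *)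

theory Defs
  imports Main
begin

definition antimorphic_involution :: "'a set \<Rightarrow> ('a list \<Rightarrow> 'a list) \<Rightarrow> bool" where
  "antimorphic_involution S \<theta> \<longleftrightarrow>
     (\<forall>w \<in> lists S. \<theta> w \<in> lists S) \<and>
     (\<forall>u \<in> lists S. \<forall>v \<in> lists S. \<theta> (u @ v) = \<theta> v @ \<theta> u) \<and>
     (\<forall>w \<in> lists S. \<theta> (\<theta> w) = w)"

definition pseudo_power :: "('a list \<Rightarrow> 'a list) \<Rightarrow> nat \<Rightarrow> 'a list \<Rightarrow> bool" where
  "pseudo_power \<theta> k w \<longleftrightarrow> w \<noteq> [] \<and>
     (\<exists>us. length us = k \<and> concat us = w \<and>
        (\<forall>i<k. \<forall>j<k. us ! i = us ! j \<or> us ! i = \<theta> (us ! j)))"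

definition infinite_word :: "'a set \<Rightarrow> (nat \<Rightarrow> 'a) \<Rightarrow> bool" where
  "infinite_word S x \<longleftrightarrow> (\<forall>n. x n \<in> S)"

definition pseudo_power_free_inf :: "('a list \<Rightarrow> 'a list) \<Rightarrow> nat \<Rightarrow> (nat \<Rightarrow> 'a) \<Rightarrow> bool" where
  "pseudo_power_free_inf \<theta> k x \<longleftrightarrow> (\<forall>i j. \<not> pseudo_power \<theta> k (map x [i..<j]))"

end

theory Submission
  imports Defs
begin

function tm :: "nat \<Rightarrow> bool" where
  "tm n = (if n = 0 then False else (tm (n div 2) \<noteq> odd n))"
  by auto
termination by (relation "measure id") auto

declare tm.simps[simp del]

lemma tm_even: "tm (2*n) = tm n"
  by (subst tm.simps) (cases "n = 0", auto simp: tm.simps[of 0])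

lemma tm_odd: "tm (2*n+1) = (\<not> tm n)"
  by (subst tm.simps) auto

lemma tm_pair: "tm (2*n) \<noteq> tm (2*n+1)"
  by (metis tm_even tm_odd)

lemma no_three: "\<not> (tm j = tm (j+1) \<and> tm (j+1) = tm (j+2))"
proof (cases "even j")
  case True
  then obtain n where "j = 2*n" by auto
  then show ?thesis using tm_pair[of n] by auto
next
  case False
  then obtain n where "j + 1 = 2*n" by (metis evenE odd_even_add odd_one)
  then have "j + 2 = 2*n+1" by simp
  then show ?thesis using tm_pair[of n] \<open>j+1 = 2*n\<close> by auto
qed

lemma ovf: "0 < m \<Longrightarrow> \<exists>j. i \<le> j \<and> j \<le> i + m \<and> tm j \<noteq> tm (j+m)"
proof (induction m arbitrary: i rule: less_induct)
  case (less m)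
  show ?case
  proof (rule ccontr)
    assume "\<not> ?case"
    then have H: "\<And>j. i \<le> j \<Longrightarrow> j \<le> i + m \<Longrightarrow> tm j = tm (j+m)" by auto
    show False
    proof (cases "even m")
      case True
      then obtain m' where m': "m = 2*m'" by auto
      with less.prems have "0 < m'" "m' < m" by auto
      from less.IH[OF \<open>m' < m\<close> \<open>0 < m'\<close>, of "i div 2"]
      obtain j where j: "i div 2 \<le> j" "j \<le> i div 2 + m'" "tm j \<noteq> tm (j+m')" by auto
      show False
      proof (cases "even i")
        case True
        have "i \<le> 2*j" "2*j \<le> i + m" using j True m' by auto
        from H[OF this] have "tm (2*j) = tm (2*(j+m'))" using m' by (simp add: algebra_simps)
        then show False using j(3) by (simp only: tm_even)
      next
        case False
        have "i \<le> 2*j+1" "2*j+1 \<le> i + m" using j False m' by presburger+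
        from H[OF this] have "tm (2*j+1) = tm (2*(j+m')+1)" using m' by (simp add: algebra_simps)
        then show False using j(3) by (simp only: tm_odd) blast
      qed
    next
      case False
      show False
      proof (cases "m = 1")
        case True
        have "tm i = tm (i+1)" "tm (i+1) = tm (i+2)" using H[of i] H[of "i+1"] True by auto
        then show False using no_three[of i] by auto
      next
        case m1: False
        with False have m3: "m \<ge> 3" by presburger
        have alt1: "tm j \<noteq> tm (j+1)" if "i \<le> j" "j < i + m" for j
        proof (cases "even j")
          case True
          then obtain n where "j = 2*n" by auto
          then show ?thesis using tm_pair[of n] by auto
        next
          case False
          with \<open>odd m\<close> have "even (j+m)" by auto
          then obtain n where n: "j + m = 2*n" by (metis evenE)
          have "tm (j+m) \<noteq> tm (j+m+1)" using tm_pair[of n] n by auto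
          moreover have "tm j = tm (j+m)" "tm (j+1) = tm (j+1+m)" using H that by auto
          ultimately show ?thesis by auto
        qed
        have alt: "tm j \<noteq> tm (j+1)" if "i \<le> j" "j < i + 2*m" for j
        proof (cases "j < i + m")
          case True then show ?thesis using alt1 that by auto
        next
          case False
          define j' where "j' = j - m"
          have j': "j = j' + m" "i \<le> j'" "j' < i + m" using False that by (auto simp: j'_def)
          have "tm j' = tm (j'+m)" "tm (j'+1) = tm (j'+1+m)" using H j' by auto
          then show ?thesis using alt1[OF j'(2,3)] j' by auto
        qed
        define e where "e = (if even i then i else i+1)"
        have e: "even e" "i \<le> e" "e + 4 < i + 2*m" using m3 by (auto simp: e_def)
        then obtain n where n: "e = 2*n" by auto
        have a0: "tm e \<noteq> tm (e+1)" using alt[of e] e by auto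
        have a1: "tm (e+1) \<noteq> tm (e+1+1)" using alt[of "e+1"] e by auto
        have a2: "tm (e+2) \<noteq> tm (e+2+1)" using alt[of "e+2"] e by auto
        have a3: "tm (e+3) \<noteq> tm (e+3+1)" using alt[of "e+3"] e by auto
        have "e+1+1 = e+2" "e+2+1 = e+3" "e+3+1 = e+4" by auto
        then have "tm e = tm (e+2)" "tm (e+2) = tm (e+4)" using a0 a1 a2 a3 by metis+
        moreover have "e+2 = 2*(n+1)" "e+4 = 2*(n+2)" using n by auto
        then have "tm e = tm n" "tm (e+2) = tm (n+1)" "tm (e+4) = tm (n+2)"
          using n tm_even by metis+
        ultimately show False using no_three[of n] by metis
      qed
    qed
  qed
qed

definition vt :: "nat \<Rightarrow> nat" where
  "vt n = (if tm n = tm (Suc n) then 1 else if tm (Suc n) then 2 else 0)"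

lemma vt_step:
  assumes "vt p = vt q"
  shows "(tm (Suc p) = tm (Suc q)) = (tm p = tm q)"
    and "tm p \<noteq> tm (Suc p) \<Longrightarrow> tm p = tm q"
  using assms unfolding vt_def by (auto split: if_splits)

lemma vt_sqfree:
  assumes "0 < n" shows "\<not> (\<forall>s<n. vt (a+s) = vt (a+n+s))"
proof
  assume E: "\<forall>s<n. vt (a+s) = vt (a+n+s)"
  have D: "(tm (a+s) = tm (a+n+s)) = (tm a = tm (a+n))" if "s \<le> n" for s
    using that
  proof (induction s)
    case 0 then show ?case by simp
  next
    case (Suc s)
    then have "vt (a+s) = vt (a+n+s)" using E by auto
    from vt_step(1)[OF this] Suc show ?case by auto
  qed
  show False
  proof (cases "tm a = tm (a+n)")
    case True
    obtain j where j: "a \<le> j" "j \<le> a + n" "tm j \<noteq> tm (j+n)" using ovf[OF assms] by blast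
    then obtain s where "j = a + s" "s \<le> n" by (metis le_Suc_ex add_le_cancel_left)
    then show False using D[of s] True j by (simp add: algebra_simps)
  next
    case False
    have C: "tm (a+s) = tm a" if "s \<le> n" for s
      using that
    proof (induction s)
      case 0 then show ?case by simp
    next
      case (Suc s)
      then have v: "vt (a+s) = vt (a+n+s)" using E by auto
      have "tm (a+s) \<noteq> tm (a+n+s)" using D[of s] Suc False by auto
      then have "tm (a+s) = tm (Suc (a+s))" using vt_step(2)[OF v] by auto
      then show ?case using Suc by auto
    qed
    from C[of n] False show False by simp
  qed
qed

lemma map_upt_pt: "map f [a..<a+l] = map f [b..<b+l] \<Longrightarrow> s < l \<Longrightarrow> f (a+s) = f (b+s)"
  by (metis add_diff_cancel_left' length_map length_upt nth_map nth_upt add_less_cancel_left)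

lemma pt_map_upt: "(\<And>s. s < l \<Longrightarrow> f (a+s) = f (b+s)) \<Longrightarrow> map f [a..<a+l] = map f [b..<b+l]"
  by (rule nth_equalityI) auto

lemma sub_win: "q + l \<le> n \<Longrightarrow> map f [a+q..<a+q+l] = take l (drop q (map f [a..<a+n]))"
  by (simp add: drop_map take_map add.assoc)

definition f0 :: "bool list" where "f0 = [False,False,False,True,False,False,True,True]"
definition f1 :: "bool list" where "f1 = [False,False,False,True,False,True,True,True]"
definition fb :: "bool \<Rightarrow> bool list" where "fb b = (if b then f1 else f0)"
definition mk :: "bool list" where "mk = [False,False,False,True,False]"

definition pp4 :: "bool list \<Rightarrow> nat \<Rightarrow> bool" where
  "pp4 w m = (let U = take m w; R = rev U in list_all (\<lambda>t. take m (drop (t*m) w) = U \<or> take m (drop (t*m) w) = R) [1,2,3])"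

lemma BF: "list_all (\<lambda>a. list_all (\<lambda>b. list_all (\<lambda>c. list_all (\<lambda>d. list_all (\<lambda>q. list_all (\<lambda>m. \<not> pp4 (drop q (fb a @ fb b @ fb c @ fb d)) m) [1..<7]) [0..<8]) [True,False]) [True,False]) [True,False]) [True,False]"
  by code_simp

lemma MK: "list_all (\<lambda>x. list_all (\<lambda>y. list_all (\<lambda>q. take 5 (drop q (fb x @ fb y)) = mk \<longrightarrow> q = 0) [0..<8]) [True,False]) [True,False]"
  by code_simp

lemma RV: "list_all (\<lambda>x. list_all (\<lambda>y. list_all (\<lambda>x'. list_all (\<lambda>y'. list_all (\<lambda>q. list_all (\<lambda>q'.
   rev (take 7 (drop q (fb x @ fb y))) \<noteq> take 7 (drop q' (fb x' @ fb y'))) [0..<8]) [0..<8]) [True,False]) [True,False]) [True,False]) [True,False]"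
  by code_simp

lemma bool_in: "(x::bool) \<in> set [True,False]" by (cases x) auto

lemma BF': "q < 8 \<Longrightarrow> 0 < m \<Longrightarrow> m < 7 \<Longrightarrow> \<not> pp4 (drop q (fb a @ fb b @ fb c @ fb d)) m"
  using BF unfolding list_all_iff using bool_in[of a] bool_in[of b] bool_in[of c] bool_in[of d]
  by (metis atLeastLessThan_iff set_upt zero_le less_one Suc_leI One_nat_def)

lemma MK': "q < 8 \<Longrightarrow> take 5 (drop q (fb x @ fb y)) = mk \<Longrightarrow> q = 0"
  using MK unfolding list_all_iff using bool_in[of x] bool_in[of y]
  by (metis atLeastLessThan_iff set_upt zero_le)

lemma RV': "q < 8 \<Longrightarrow> q' < 8 \<Longrightarrow> rev (take 7 (drop q (fb x @ fb y))) \<noteq> take 7 (drop q' (fb x' @ fb y'))"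
  using RV unfolding list_all_iff using bool_in[of x] bool_in[of y] bool_in[of x'] bool_in[of y']
  by (metis atLeastLessThan_iff set_upt zero_le)

lemma len_fb[simp]: "length (fb b) = 8" by (simp add: fb_def f0_def f1_def)

lemma fb_inj: "fb a = fb b \<Longrightarrow> a = b"
  by (cases a; cases b) (auto simp: fb_def f0_def f1_def)

lemma fb_mk: "take 5 (fb b) = mk"
  by (cases b) (auto simp: fb_def f0_def f1_def mk_def)

definition zb :: "nat \<Rightarrow> bool" where "zb n = fb (tm (n div 8)) ! (n mod 8)"

lemma zb_block: "p < 8 \<Longrightarrow> zb (8*b+p) = fb (tm b) ! p"
  by (simp add: zb_def)

lemma zb_blockl: "map zb [8*b..<8*b+8] = fb (tm b)"
  by (rule nth_equalityI) (auto simp: zb_block)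

lemma win: "map zb [8*b..<8*b+8*n] = concat (map (\<lambda>c. fb (tm c)) [b..<b+n])"
proof (induction n)
  case 0 then show ?case by simp
next
  case (Suc n)
  have "[8*b..<8*b+8*Suc n] = [8*b..<8*b+8*n] @ [8*(b+n)..<8*(b+n)+8]"
    using upt_add_eq_append[of "8*b" "8*b+8*n" 8] by (simp add: algebra_simps)
  then show ?case using Suc zb_blockl[of "b+n"] by simp
qed

lemma win2: "map zb [8*b..<8*b+16] = fb (tm b) @ fb (tm (b+1))"
proof -
  have "[b..<b+2] = [b,b+1]" by (simp add: upt_rec)
  then show ?thesis using win[of b 2] by simp
qed

lemma win4: "map zb [8*b..<8*b+32] = fb (tm b) @ fb (tm (b+1)) @ fb (tm (b+2)) @ fb (tm (b+3))"
proof -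
  have "[b..<b+4] = [b,b+1,b+2,b+3]" by (simp add: upt_rec)
  then show ?thesis using win[of b 4] by simp
qed

lemma factor2: "l \<le> 9 \<Longrightarrow> map zb [p..<p+l] = take l (drop (p mod 8) (fb (tm (p div 8)) @ fb (tm (p div 8 + 1))))"
proof -
  assume l: "l \<le> 9"
  have p: "p = 8*(p div 8) + p mod 8" by simp
  have "map zb [8*(p div 8) + p mod 8..<8*(p div 8) + p mod 8 + l] = take l (drop (p mod 8) (map zb [8*(p div 8)..<8*(p div 8)+16]))"
    using l by (intro sub_win) auto
  then show ?thesis using p win2 by metis
qed

lemma marker_pos: "map zb [p..<p+5] = mk \<Longrightarrow> p mod 8 = 0"
  using factor2[of 5 p] MK' by auto

lemma rev7: "rev (map zb [p..<p+7]) \<noteq> map zb [p'..<p'+7]"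
  using factor2[of 7 p] factor2[of 7 p'] RV' by auto

lemma marker_at: "map zb [8*b..<8*b+5] = mk"
proof -
  have "map zb [8*b..<8*b+5] = take 5 (map zb [8*b..<8*b+8])"
    by (simp add: take_map)
  then show ?thesis using zb_blockl fb_mk by simp
qed

lemma bin_free:
  assumes m0: "0 < m"
    and W: "\<forall>t<4. map zb [i+t*m..<i+t*m+m] = map zb [i..<i+m] \<or> map zb [i+t*m..<i+t*m+m] = rev (map zb [i..<i+m])"
  shows False
proof (cases "m < 7")
  case True
  define a where "a = i div 8"
  define q where "q = i mod 8"
  have i: "i = 8*a + q" and q8: "q < 8" by (auto simp: a_def q_def)
  define w where "w = map zb [8*a..<8*a+32]"
  have w4: "w = fb (tm a) @ fb (tm (a+1)) @ fb (tm (a+2)) @ fb (tm (a+3))"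
    unfolding w_def by (rule win4)
  have piece: "map zb [i+t*m..<i+t*m+m] = take m (drop (t*m) (drop q w))" if "t < 4" for t
  proof -
    have "(t+1)*m \<le> 4*6" using that True by (intro mult_le_mono) auto
    then have "q + t*m + m \<le> 32" using q8 by (simp add: algebra_simps)
    then have "map zb [8*a+(q+t*m)..<8*a+(q+t*m)+m] = take m (drop (q+t*m) w)"
      unfolding w_def by (rule sub_win)
    moreover have e: "i+t*m = 8*a+(q+t*m)" using i by simp
    ultimately show ?thesis by (simp only: e drop_drop add.commute[of "t*m" q])
  qed
  have "pp4 (drop q w) m"
  proof -
    have U: "take m (drop q w) = map zb [i..<i+m]" using piece[of 0] by simp
    have c: "take m (drop (t*m) (drop q w)) = map zb [i..<i+m] \<or> take m (drop (t*m) (drop q w)) = rev (map zb [i..<i+m])"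
      if "t < 4" for t using W piece[OF that] that by metis
    show ?thesis unfolding pp4_def Let_def U using c[of 1] c[of 2] c[of 3] by simp
  qed
  then show False using BF'[OF q8 m0 True] w4 by simp
next
  case False
  then have m7: "m \<ge> 7" by simp
  have EQ: "map zb [i+t*m..<i+t*m+m] = map zb [i..<i+m]" if "t < 4" for t
  proof (rule ccontr)
    assume ne: "\<not> ?thesis"
    then have R: "map zb [i+t*m..<i+t*m+m] = rev (map zb [i..<i+m])" using W that by auto
    have "take 7 (rev (map zb [i..<i+m])) = rev (drop (m-7) (map zb [i..<i+m]))"
      by (simp add: take_rev)
    also have "drop (m-7) (map zb [i..<i+m]) = map zb [i+(m-7)..<i+(m-7)+7]"
      using m7 by (simp add: drop_map)
    finally have A: "take 7 (rev (map zb [i..<i+m])) = rev (map zb [i+(m-7)..<i+(m-7)+7])" .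
    have B: "take 7 (map zb [i+t*m..<i+t*m+m]) = map zb [i+t*m..<i+t*m+7]"
      using m7 by (simp add: take_map)
    from R A B have "rev (map zb [i+(m-7)..<i+(m-7)+7]) = map zb [i+t*m..<i+t*m+7]" by simp
    then show False using rev7 by blast
  qed
  have Z: "zb (i+s) = zb (i + s mod m)" if "s < 4*m" for s
  proof -
    define t where "t = s div m"
    have t4: "t < 4" using that m0 by (simp add: t_def less_mult_imp_div_less mult.commute)
    have s: "s = t*m + s mod m" by (simp add: t_def)
    have "zb (i+t*m + s mod m) = zb (i + s mod m)"
      using map_upt_pt[OF EQ[OF t4], of "s mod m"] m0 by simp
    then show ?thesis using s by (metis add.assoc)
  qed
  have Z2: "zb (i+s+m) = zb (i+s)" if "s + m < 4*m" for s
  proof -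
    have "zb (i+(s+m)) = zb (i + (s+m) mod m)" using Z that by blast
    also have "(s+m) mod m = s mod m" by simp
    also have "zb (i + s mod m) = zb (i+s)" using Z[of s] that by simp
    finally show ?thesis by (simp add: add.assoc)
  qed
  define A where "A = (i+7) div 8"
  define P where "P = 8*A"
  have P: "i \<le> P" "P \<le> i+7" unfolding P_def A_def by auto
  have mkP: "map zb [P..<P+5] = mk" unfolding P_def by (rule marker_at)
  have "map zb [P+m..<P+m+5] = map zb [P..<P+5]"
  proof (rule pt_map_upt)
    fix p :: nat assume "p < 5"
    then have "(P - i + p) + m < 4*m" using P m7 by linarith
    from Z2[OF this] show "zb (P+m+p) = zb (P+p)" using P by (simp add: algebra_simps)
  qed
  with mkP have "(P+m) mod 8 = 0" using marker_pos by simp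
  then have "m mod 8 = 0" unfolding P_def by simp
  then obtain r where r: "m = 8*r" by auto
  with m0 have r0: "0 < r" by simp
  obtain j where j: "A \<le> j" "j \<le> A + r" "tm j \<noteq> tm (j+r)" using ovf[OF r0] by blast
  have "fb (tm (j+r)) = fb (tm j)"
  proof -
    have "map zb [8*j+m..<8*j+m+8] = map zb [8*j..<8*j+8]"
    proof (rule pt_map_upt)
      fix p :: nat assume p: "p < 8"
      have "8*j \<ge> i" "8*j \<le> i + 7 + m" using j P r unfolding P_def by auto
      then have "(8*j - i + p) + m < 4*m" using p m7 r r0 by linarith
      from Z2[OF this] show "zb (8*j+m+p) = zb (8*j+p)" using \<open>8*j \<ge> i\<close> by (simp add: algebra_simps)
    qed
    moreover have "8*j+m = 8*(j+r)" using r by simp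
    ultimately show ?thesis using zb_blockl[of j] zb_blockl[of "j+r"] by simp
  qed
  then show False using fb_inj j(3) by metis
qed

lemma theta_nil: assumes "antimorphic_involution S \<theta>" shows "\<theta> [] = []"
proof -
  have A2: "\<forall>u\<in>lists S. \<forall>v\<in>lists S. \<theta> (u @ v) = \<theta> v @ \<theta> u"
    using assms unfolding antimorphic_involution_def by blast
  have "\<theta> ([] @ []) = \<theta> [] @ \<theta> []" using A2 by (metis lists.Nil)
  then have "length (\<theta> []) = length (\<theta> []) + length (\<theta> [])" by (metis append_Nil length_append)
  then show ?thesis by simp
qed

lemma theta_ne: assumes AI: "antimorphic_involution S \<theta>" and "v \<in> lists S" "v \<noteq> []" shows "\<theta> v \<noteq> []"
proof
  assume "\<theta> v = []"
  then have "\<theta> (\<theta> v) = []" using theta_nil[OF AI] by simp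
  then show False using AI assms unfolding antimorphic_involution_def by auto
qed

lemma theta_single: assumes AI: "antimorphic_involution S \<theta>" and a: "a \<in> S" shows "length (\<theta> [a]) = 1"
proof -
  define v where "v = \<theta> [a]"
  have vS: "v \<in> lists S" using AI a unfolding antimorphic_involution_def v_def by auto
  have tv: "\<theta> v = [a]" using AI a unfolding antimorphic_involution_def v_def by auto
  show ?thesis
  proof (cases v)
    case Nil
    then show ?thesis using tv theta_nil[OF AI] by simp
  next
    case (Cons b r)
    show ?thesis
    proof (cases r)
      case Nil then show ?thesis using Cons v_def by simp
    next
      case (Cons c r')
      have bS: "[b] \<in> lists S" and rS: "r \<in> lists S" using vS \<open>v = b # r\<close> by auto
      have "\<theta> v = \<theta> r @ \<theta> [b]" using AI bS rS \<open>v = b # r\<close> unfolding antimorphic_involution_def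
        by (metis append_Cons append_Nil)
      moreover have "\<theta> r \<noteq> []" using theta_ne[OF AI rS] Cons by simp
      moreover have "\<theta> [b] \<noteq> []" using theta_ne[OF AI bS] by simp
      ultimately have "length (\<theta> v) \<ge> 2"
        by (metis One_nat_def Suc_leI add_mono length_append length_greater_0_conv one_add_one)
      then show ?thesis using tv by simp
    qed
  qed
qed

lemma theta_len: assumes AI: "antimorphic_involution S \<theta>" shows "w \<in> lists S \<Longrightarrow> length (\<theta> w) = length w"
proof (induction w)
  case Nil then show ?case using theta_nil[OF AI] by simp
next
  case (Cons a w)
  have A2: "\<forall>u\<in>lists S. \<forall>v\<in>lists S. \<theta> (u @ v) = \<theta> v @ \<theta> u"
    using AI unfolding antimorphic_involution_def by blast
  have "[a] \<in> lists S" "w \<in> lists S" using Cons.prems by auto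
  then have "\<theta> ([a] @ w) = \<theta> w @ \<theta> [a]" using A2 by blast
  then show ?case using Cons theta_single[OF AI] by simp
qed

lemma concat_nth: "(\<forall>u\<in>set us. length u = m) \<Longrightarrow> t < length us \<Longrightarrow> us ! t = take m (drop (t*m) (concat us))"
proof (induction us arbitrary: t)
  case Nil then show ?case by simp
next
  case (Cons a us)
  show ?case
  proof (cases t)
    case 0 then show ?thesis using Cons by simp
  next
    case (Suc t')
    have "drop (t*m) (concat (a # us)) = drop (t'*m) (concat us)"
      using Cons.prems Suc by (simp add: drop_append)
    then show ?thesis using Cons Suc by simp
  qed
qed

lemma pp_pieces:
  assumes AI: "antimorphic_involution S \<theta>" and X: "\<forall>n. x n \<in> S"
    and PP: "pseudo_power \<theta> k (map x [i..<j])" and k: "4 \<le> k"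
  shows "\<exists>m>0. \<forall>t<4. map x [i+t*m..<i+t*m+m] = map x [i..<i+m] \<or> map x [i+t*m..<i+t*m+m] = \<theta> (map x [i..<i+m])"
proof -
  obtain us where us: "length us = k" "concat us = map x [i..<j]"
    and H: "\<forall>a<k. \<forall>b<k. us ! a = us ! b \<or> us ! a = \<theta> (us ! b)" and ne: "map x [i..<j] \<noteq> []"
    using PP unfolding pseudo_power_def by auto
  have ij: "i < j" using ne by simp
  have inS: "us ! a \<in> lists S" if "a < k" for a
  proof -
    have "us ! a \<in> set us" using that us(1) by simp
    then have "set (us ! a) \<subseteq> set (concat us)" by auto
    then show ?thesis using us(2) X by auto
  qed
  define m where "m = length (us ! 0)"
  have len: "length (us ! a) = m" if "a < k" for a
    using H that k inS theta_len[OF AI] unfolding m_def by (metis le_trans zero_less_numeral order_less_le_trans)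
  have lenall: "\<forall>u\<in>set us. length u = m" using len us(1) by (metis in_set_conv_nth)
  have "map length us = replicate k m" using len us(1) by (intro nth_equalityI) auto
  then have lc: "length (concat us) = k*m" by (simp add: length_concat sum_list_replicate)
  then have km: "j - i = k*m" using us(2) by simp
  have m0: "0 < m" using km ij by (cases "m = 0") auto
  have piece: "us ! t = map x [i+t*m..<i+t*m+m]" if "t < 4" for t
  proof -
    have "us ! t = take m (drop (t*m) (concat us))" using concat_nth[OF lenall] that k us(1) by simp
    also have "\<dots> = take m (drop (t*m) (map x [i..<i+(j-i)]))" using us(2) ij by simp
    also have "\<dots> = map x [i+t*m..<i+t*m+m]"
    proof -
      have "(t+1)*m \<le> k*m" using that k by (intro mult_le_mono1) simp
      then have "t*m + m \<le> j - i" using km by simp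
      then show ?thesis using sub_win[of "t*m" m "j-i" x i] by simp
    qed
    finally show ?thesis .
  qed
  show ?thesis
  proof (intro exI[of _ m] conjI allI impI m0)
    fix t :: nat assume t: "t < 4"
    have "us ! t = us ! 0 \<or> us ! t = \<theta> (us ! 0)" using H t k by auto
    then show "map x [i+t*m..<i+t*m+m] = map x [i..<i+m] \<or> map x [i+t*m..<i+t*m+m] = \<theta> (map x [i..<i+m])"
      using piece[OF t] piece[of 0] by simp
  qed
qed

lemma sq_from_W:
  assumes m0: "0 < m" and W: "\<forall>t<4. map x [i+t*m..<i+t*m+m] = map x [i..<i+m] \<or> map x [i+t*m..<i+t*m+m] = \<theta> (map x [i..<i+m])"
  shows "\<exists>p n. 0 < n \<and> (\<forall>s<n. x (p+s) = x (p+n+s))"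
proof -
  define V where "V t = map x [i+t*m..<i+t*m+m]" for t
  have V0: "V 0 = map x [i..<i+m]" by (simp add: V_def)
  have W': "V t = V 0 \<or> V t = \<theta> (V 0)" if "t < 4" for t using W that V0 unfolding V_def by auto
  have pt: "x (i+a*m+s) = x (i+b*m+s)" if "V a = V b" "s < m" for a b s
    using map_upt_pt[OF that(1)[unfolded V_def] that(2)] .
  show ?thesis
  proof (cases "V 1 = V 0")
    case True
    show ?thesis apply (rule exI[of _ i], rule exI[of _ m]) using pt[OF True] m0 by (auto simp: algebra_simps)
  next
    case F1: False
    then have V1: "V 1 = \<theta> (V 0)" using W'[of 1] by auto
    show ?thesis
    proof (cases "V 2 = V 1")
      case True
      show ?thesis apply (rule exI[of _ "i+m"], rule exI[of _ m]) using pt[OF True] m0 by (auto simp: algebra_simps mult_2_right[symmetric])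
    next
      case False
      then have V2: "V 2 = V 0" using W'[of 2] V1 by auto
      show ?thesis
      proof (cases "V 3 = V 2")
        case True
        show ?thesis apply (rule exI[of _ "i+2*m"], rule exI[of _ m]) using pt[OF True] m0 by (auto simp: algebra_simps)
      next
        case False
        then have V3: "V 3 = V 1" using W'[of 3] V1 V2 by auto
        show ?thesis
        proof (rule exI[of _ i], rule exI[of _ "2*m"], intro conjI allI impI)
          show "0 < 2*m" using m0 by simp
          fix s assume s: "s < 2*m"
          show "x (i+s) = x (i+2*m+s)"
          proof (cases "s < m")
            case True
            then show ?thesis using pt[OF V2[symmetric] True] by (simp add: algebra_simps)
          next
            case False
            then have "s - m < m" using s by simp
            from pt[OF V3[symmetric] this] False show ?thesis by (simp add: algebra_simps)
          qed
        qed
      qed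
    qed
  qed
qed

lemma concat_single: "concat (map (\<lambda>n. [f n]) xs) = map f xs" by (induct xs) auto

lemma pp_singletons:
  assumes "4 \<le> k" and "\<And>p q. p < k \<Longrightarrow> q < k \<Longrightarrow> [x p] = [x q] \<or> [x p] = \<theta> [x q]"
  shows "pseudo_power \<theta> k (map x [0..<k])"
  unfolding pseudo_power_def
proof (intro conjI exI[of _ "map (\<lambda>n. [x n]) [0..<k]"])
  show "map x [0..<k] \<noteq> []" using assms(1) by simp
qed (use assms(2) concat_single in auto)

lemma part1:
  assumes "finite S" "card S \<le> 1" "4 \<le> k" "infinite_word S x"
  shows "\<not> pseudo_power_free_inf \<theta> k x"
proof -
  have X: "\<forall>n. x n \<in> S" using assms(4) unfolding infinite_word_def by auto
  have eq: "x p = x q" for p q using X assms(1,2) card_le_Suc0_iff_eq[OF assms(1)] by auto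
  have "pseudo_power \<theta> k (map x [0..<k])"
    by (rule pp_singletons[OF assms(3)]) (use eq in auto)
  then show ?thesis unfolding pseudo_power_free_inf_def by blast
qed

lemma part2:
  assumes "finite S" "3 \<le> card S" "4 \<le> k" and AI: "antimorphic_involution S \<theta>"
  shows "\<exists>x. infinite_word S x \<and> pseudo_power_free_inf \<theta> k x"
proof -
  obtain a B where aB: "S = insert a B" "a \<notin> B" "2 \<le> card B" "finite B"
    using assms(2) card_le_Suc_iff[of 2 S] by (auto simp: numeral_eq_Suc)
  obtain b C where bC: "B = insert b C" "b \<notin> C" "1 \<le> card C" "finite C"
    using aB(3) card_le_Suc_iff[of 1 B] by (auto simp: numeral_eq_Suc)
  obtain c where c: "c \<in> C" using bC(3) by (metis card.empty ex_in_conv not_one_le_zero)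
  have d: "a \<noteq> b" "a \<noteq> c" "b \<noteq> c" using aB bC c by auto
  have S: "a \<in> S" "b \<in> S" "c \<in> S" using aB bC c by auto
  define x where "x n = (if vt n = 0 then a else if vt n = 1 then b else c)" for n
  have X: "\<forall>n. x n \<in> S" using S by (simp add: x_def)
  have xinj: "x p = x q \<Longrightarrow> vt p = vt q" for p q
  proof -
    assume e: "x p = x q"
    have "vt p \<le> 2" "vt q \<le> 2" by (simp_all add: vt_def)
    then show "vt p = vt q" using e d unfolding x_def by (auto split: if_splits)
  qed
  have free: "pseudo_power_free_inf \<theta> k x"
    unfolding pseudo_power_free_inf_def
  proof (intro allI notI)
    fix i j assume pp: "pseudo_power \<theta> k (map x [i..<j])"
    obtain m where "0 < m" and W: "\<forall>t<4. map x [i+t*m..<i+t*m+m] = map x [i..<i+m] \<or> map x [i+t*m..<i+t*m+m] = \<theta> (map x [i..<i+m])"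
      using pp_pieces[OF AI X pp assms(3)] by blast
    obtain p n where "0 < n" "\<forall>s<n. x (p+s) = x (p+n+s)" using sq_from_W[where x=x and \<theta>=\<theta> and i=i and m=m, OF \<open>0 < m\<close> W] by blast
    then have "\<forall>s<n. vt (p+s) = vt (p+n+s)" using xinj by blast
    then show False using vt_sqfree[of n p] \<open>0 < n\<close> by blast
  qed
  show ?thesis using X free unfolding infinite_word_def by blast
qed

lemma part3:
  assumes "card S = 2" "4 \<le> k"
  shows "\<exists>\<theta>1 \<theta>2. antimorphic_involution S \<theta>1 \<and> antimorphic_involution S \<theta>2 \<and>
               (\<exists>x. infinite_word S x \<and> pseudo_power_free_inf \<theta>1 k x) \<and>
               \<not> (\<exists>x. infinite_word S x \<and> pseudo_power_free_inf \<theta>2 k x)"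
proof -
  obtain a b where ab: "S = {a,b}" "a \<noteq> b" using assms(1) card_2_iff by metis
  define \<sigma> where "\<sigma> c = (if c = a then b else a)" for c
  define \<theta>2 where "\<theta>2 w = rev (map \<sigma> w)" for w
  have ss: "\<sigma> (\<sigma> c) = c" if "c \<in> S" for c using that ab by (auto simp: \<sigma>_def)
  have AI1: "antimorphic_involution S rev" unfolding antimorphic_involution_def by auto
  have AI2: "antimorphic_involution S \<theta>2" unfolding antimorphic_involution_def \<theta>2_def
  proof (intro conjI ballI)
    fix w assume "w \<in> lists S"
    show "rev (map \<sigma> w) \<in> lists S" using ab by (auto simp: \<sigma>_def)
    have "map \<sigma> (map \<sigma> w) = w" using ss \<open>w \<in> lists S\<close> by (induct w) auto
    then show "rev (map \<sigma> (rev (map \<sigma> w))) = w" by (simp add: rev_map[symmetric])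
  qed auto
  define h where "h \<beta> = (if \<beta> then b else a)" for \<beta>
  have hinj: "inj h" using ab unfolding h_def inj_def by auto
  define x1 where "x1 n = h (zb n)" for n
  have X1: "\<forall>n. x1 n \<in> S" using ab by (simp add: x1_def h_def)
  have free1: "pseudo_power_free_inf rev k x1"
    unfolding pseudo_power_free_inf_def
  proof (intro allI notI)
    fix i j assume pp: "pseudo_power rev k (map x1 [i..<j])"
    obtain m where m0: "0 < m" and W: "\<forall>t<4. map x1 [i+t*m..<i+t*m+m] = map x1 [i..<i+m] \<or> map x1 [i+t*m..<i+t*m+m] = rev (map x1 [i..<i+m])"
      using pp_pieces[OF AI1 X1 pp assms(2)] by blast
    have mx: "map x1 l = map h (map zb l)" for l by (simp add: x1_def)
    have e1: "(map x1 l1 = map x1 l2) = (map zb l1 = map zb l2)" for l1 l2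
      by (metis mx inj_map_eq_map[OF hinj])
    have e2: "(map x1 l1 = rev (map x1 l2)) = (map zb l1 = rev (map zb l2))" for l1 l2
      by (metis mx inj_map_eq_map[OF hinj] rev_map)
    have "\<forall>t<4. map zb [i+t*m..<i+t*m+m] = map zb [i..<i+m] \<or> map zb [i+t*m..<i+t*m+m] = rev (map zb [i..<i+m])"
      using W by (simp only: e1 e2)
    then show False using bin_free[OF m0] by blast
  qed
  have notfree2: "\<not> pseudo_power_free_inf \<theta>2 k x" if "infinite_word S x" for x
  proof -
    have X: "x n \<in> S" for n using that unfolding infinite_word_def by auto
    have "pseudo_power \<theta>2 k (map x [0..<k])"
    proof (rule pp_singletons[OF assms(2)])
      fix p q
      show "[x p] = [x q] \<or> [x p] = \<theta>2 [x q]" using X[of p] X[of q] ab by (auto simp: \<theta>2_def \<sigma>_def)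
    qed
    then show ?thesis unfolding pseudo_power_free_inf_def by blast
  qed
  show ?thesis
    apply (rule exI[of _ rev], rule exI[of _ \<theta>2])
    using AI1 AI2 X1 free1 notfree2 unfolding infinite_word_def by blast
qed

theorem mainTheorem3:
  fixes S :: "'a set" and k :: nat
  assumes "finite S" and "k \<ge> 4"
  shows "(card S \<le> 1 \<longrightarrow>
            (\<forall>\<theta>. antimorphic_involution S \<theta> \<longrightarrow>
               \<not> (\<exists>x. infinite_word S x \<and> pseudo_power_free_inf \<theta> k x))) \<and>
         (card S \<ge> 3 \<longrightarrow>
            (\<forall>\<theta>. antimorphic_involution S \<theta> \<longrightarrow>
               (\<exists>x. infinite_word S x \<and> pseudo_power_free_inf \<theta> k x))) \<and>
         (card S = 2 \<longrightarrow>
            (\<exists>\<theta>1 \<theta>2. antimorphic_involution S \<theta>1 \<and> antimorphic_involution S \<theta>2 \<and>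
               (\<exists>x. infinite_word S x \<and> pseudo_power_free_inf \<theta>1 k x) \<and>
               \<not> (\<exists>x. infinite_word S x \<and> pseudo_power_free_inf \<theta>2 k x)))"
  using part1[OF assms(1) _ assms(2)] part2[OF assms(1) _ assms(2)] part3[OF _ assms(2)] by blast

end
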